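(* Let $\{\emptyset,\Omega\}=\mathcal{F}_0\subseteq\cdots\subseteq\mathcal{F}_n$ be $\sigma$-fields on a probability space and let $(\xi_i,\mathcal{F}_i)_{i=1,\dots,n}$ be square-integrable supermartingale differences (each $\xi_i$ is $\mathcal{F}_i$-measurable with $\mathbf{E}\xi_i^2<\infty$ and $\mathbf{E}(\xi_i\mid\mathcal{F}_{i-1})\le0$). Then for all $y\ge0$, all $\lambda>0$ and each $i$, \[ \mathbf{E}\left(\exp\left\{\lambda\xi_i-\tfrac12(\lambda\xi_i)^2\mathbf{1}_{\{\xi_i>y\}}\right\}\,\Big|\,\mathcal{F}_{i-1}\right)\le\exp\left\{\left(\frac{e^{\lambda y}-1-\lambda y}{y^2}\right)\mathbf{E}\big(\xi_i^2\mathbf{1}_{\{\xi_i\le y\}}\mid\mathcal{F}_{i-1}\big)\right\}, \] where by convention $\frac{e^{\lambda y}-1-\lambda y}{y^2}=\frac{\lambda^2}{2}$ when $y=0$. *)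

theory Defs
  imports "HOL-Probability.Probability"
begin

definition psi_coef :: "real \<Rightarrow> real \<Rightarrow> real" where
  "psi_coef lam y = (if y = 0 then lam\<^sup>2 / 2 else (exp (lam * y) - 1 - lam * y) / y\<^sup>2)"

end

theory Submission
  imports Defs
begin

lemma quad_mono:
  fixes a b :: real assumes "a \<le> b"
  shows "exp a - 1 - a - a\<^sup>2/2 \<le> exp b - 1 - b - b\<^sup>2/2"
proof (rule DERIV_nonneg_imp_nondecreasing[OF assms])
  fix x :: real
  show "\<exists>y. DERIV (\<lambda>a. exp a - 1 - a - a\<^sup>2/2) x :> y \<and> y \<ge> 0"
  proof (rule exI[of _ "exp x - 1 - x"], intro conjI)
    show "DERIV (\<lambda>a. exp a - 1 - a - a\<^sup>2/2) x :> exp x - 1 - x"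
      by (auto intro!: derivative_eq_intros)
    show "0 \<le> exp x - 1 - x" using exp_ge_add_one_self[of x] by linarith
  qed
qed

lemma exp_le_quad_neg: "(u::real) \<le> 0 \<Longrightarrow> exp u \<le> 1 + u + u\<^sup>2/2"
  using quad_mono[of u 0] by simp

lemma exp_ge_quad_pos: "(u::real) \<ge> 0 \<Longrightarrow> exp u \<ge> 1 + u + u\<^sup>2/2"
  using quad_mono[of 0 u] by simp

lemma ln_lower: assumes "(t::real) \<ge> 0" shows "t - t\<^sup>2/2 \<le> ln (1 + t)"
proof -
  have "ln (1 + 0) - 0 + 0\<^sup>2/2 \<le> ln (1 + t) - t + t\<^sup>2/2"
  proof (rule DERIV_nonneg_imp_nondecreasing[OF assms])
    fix x :: real assume x: "0 \<le> x" "x \<le> t"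
    show "\<exists>y. DERIV (\<lambda>a. ln (1 + a) - a + a\<^sup>2/2) x :> y \<and> y \<ge> 0"
    proof (rule exI[of _ "1/(1+x) - 1 + x"], intro conjI)
      show "DERIV (\<lambda>a. ln (1 + a) - a + a\<^sup>2/2) x :> 1/(1+x) - 1 + x"
        using x by (auto intro!: derivative_eq_intros)
      have "1/(1+x) - 1 + x = x\<^sup>2/(1+x)" using x by (simp add: field_simps power2_eq_square)
      then show "0 \<le> 1/(1+x) - 1 + x" using x by simp
    qed
  qed
  then show ?thesis by simp
qed

lemma exp_trunc: "(t::real) \<ge> 0 \<Longrightarrow> exp (t - t\<^sup>2/2) \<le> 1 + t"
proof -
  assume t: "t \<ge> 0"
  have "exp (t - t\<^sup>2/2) \<le> exp (ln (1 + t))" using ln_lower[OF t] by simp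
  also have "\<dots> = 1 + t" using t by simp
  finally show ?thesis .
qed

lemma hk: assumes "(u::real) \<ge> 0" shows "(u - 2) * exp u + u + 2 \<ge> 0"
proof -
  have k: "(x - 1) * exp x + 1 \<ge> 0" if "x \<ge> 0" for x :: real
  proof -
    have "(0 - 1) * exp 0 + 1 \<le> (x - 1) * exp x + 1"
    proof (rule DERIV_nonneg_imp_nondecreasing[OF that])
      fix z :: real assume "0 \<le> z" "z \<le> x"
      then show "\<exists>y. DERIV (\<lambda>a. (a - 1) * exp a + 1) z :> y \<and> y \<ge> 0"
        by (intro exI[of _ "z * exp z"]) (auto intro!: derivative_eq_intros simp: algebra_simps)
    qed
    then show ?thesis by simp
  qed
  have "(0 - 2) * exp 0 + 0 + 2 \<le> (u - 2) * exp u + u + 2"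
  proof (rule DERIV_nonneg_imp_nondecreasing[OF assms])
    fix z :: real assume "0 \<le> z" "z \<le> u"
    then show "\<exists>y. DERIV (\<lambda>a. (a - 2) * exp a + a + 2) z :> y \<and> y \<ge> 0"
      using k[of z] by (intro exI[of _ "(z - 1) * exp z + 1"]) (auto intro!: derivative_eq_intros simp: algebra_simps)
  qed
  then show ?thesis by simp
qed

lemma g_mono: fixes u v :: real assumes "0 < u" "u \<le> v"
  shows "(exp u - 1 - u) / u\<^sup>2 \<le> (exp v - 1 - v) / v\<^sup>2"
proof (rule DERIV_nonneg_imp_nondecreasing[where f="\<lambda>a. (exp a - 1 - a) / a\<^sup>2", OF assms(2)])
  fix x :: real assume x: "u \<le> x" "x \<le> v"
  hence xp: "x > 0" using assms by simp
  have d1: "DERIV (\<lambda>a. exp a - 1 - a) x :> exp x - 0 - 1"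
    by (intro DERIV_diff DERIV_exp DERIV_const DERIV_ident)
  have d2: "DERIV (\<lambda>a. a\<^sup>2) x :> 2 * x"
    using DERIV_pow[of 2 x] by simp
  have d: "DERIV (\<lambda>a. (exp a - 1 - a) / a\<^sup>2) x :>
      ((exp x - 0 - 1) * x\<^sup>2 - (exp x - 1 - x) * (2 * x)) / (x\<^sup>2 * x\<^sup>2)"
    using DERIV_quotient[OF d1 d2] xp by (simp add: power2_eq_square mult.commute)
  have num: "(exp x - 0 - 1) * x\<^sup>2 - (exp x - 1 - x) * (2 * x)
     = x * ((x - 2) * exp x + x + 2)"
    by (simp add: algebra_simps power2_eq_square)
  have "0 \<le> x * ((x - 2) * exp x + x + 2)" using hk[of x] xp by simp
  hence "0 \<le> ((exp x - 0 - 1) * x\<^sup>2 - (exp x - 1 - x) * (2 * x)) / (x\<^sup>2 * x\<^sup>2)"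
    unfolding num by simp
  with d show "\<exists>y. DERIV (\<lambda>a. (exp a - 1 - a) / a\<^sup>2) x :> y \<and> y \<ge> 0" by blast
qed

lemma pw: assumes y: "(y::real) \<ge> 0" and lam: "(lam::real) > 0"
  shows "exp (lam * x - (lam * x)\<^sup>2 / 2 * (if x > y then 1 else 0))
     \<le> 1 + lam * x + psi_coef lam y * (x\<^sup>2 * (if x \<le> y then 1 else 0))"
proof (cases "x > y")
  case True
  then have "lam * x \<ge> 0" using y lam by simp
  then show ?thesis using True exp_trunc[of "lam * x"] by simp
next
  case False
  then have xy: "x \<le> y" by simp
  show ?thesis
  proof (cases "y = 0")
    case True
    then have "lam * x \<le> 0" using xy lam True by (simp add: mult_nonneg_nonpos less_imp_le)
    then show ?thesis using exp_le_quad_neg[of "lam * x"] True xy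
      by (simp add: psi_coef_def power_mult_distrib)
  next
    case y0: False
    hence yp: "y > 0" using y by simp
    define v where "v = lam * y"
    have vp: "v > 0" using yp lam by (simp add: v_def)
    have psi: "psi_coef lam y = lam\<^sup>2 * ((exp v - 1 - v) / v\<^sup>2)"
      using y0 lam by (simp add: psi_coef_def v_def power_mult_distrib field_simps)
    consider "x = 0" | "x > 0" | "x < 0" by linarith
    then show ?thesis
    proof cases
      case 1 then show ?thesis by simp
    next
      case 2
      define u where "u = lam * x"
      have up: "u > 0" using 2 lam by (simp add: u_def)
      have uv: "u \<le> v" using xy lam by (simp add: u_def v_def)
      have "(exp u - 1 - u) / u\<^sup>2 \<le> (exp v - 1 - v) / v\<^sup>2" by (rule g_mono[OF up uv])
      hence "(exp u - 1 - u) / u\<^sup>2 * u\<^sup>2 \<le> (exp v - 1 - v) / v\<^sup>2 * u\<^sup>2"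
        by (rule mult_right_mono) simp
      hence "exp u - 1 - u \<le> (exp v - 1 - v) / v\<^sup>2 * u\<^sup>2" using up by simp
      also have "\<dots> = psi_coef lam y * x\<^sup>2" using psi by (simp add: u_def power_mult_distrib)
      finally show ?thesis using xy by (simp add: u_def)
    next
      case 3
      have "lam * x \<le> 0" using 3 lam by (simp add: mult_pos_neg less_imp_le)
      then have e: "exp (lam * x) \<le> 1 + lam * x + lam\<^sup>2 * x\<^sup>2 / 2"
        using exp_le_quad_neg[of "lam * x"] by (simp add: power_mult_distrib)
      have "exp v \<ge> 1 + v + v\<^sup>2/2" using exp_ge_quad_pos[of v] vp by simp
      hence "(exp v - 1 - v) / v\<^sup>2 \<ge> 1/2" using vp by (simp add: field_simps)
      hence "lam\<^sup>2 * (1/2) \<le> lam\<^sup>2 * ((exp v - 1 - v) / v\<^sup>2)" by (rule mult_left_mono) simp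
      hence "psi_coef lam y \<ge> lam\<^sup>2 / 2" using psi by simp
      hence "lam\<^sup>2 * x\<^sup>2 / 2 \<le> psi_coef lam y * x\<^sup>2"
        by (metis mult_right_mono zero_le_power2 times_divide_eq_left mult.commute)
      then show ?thesis using e xy by simp
    qed
  qed
qed

lemma abs_le_1sq: "\<bar>x::real\<bar> \<le> 1 + x\<^sup>2"
proof (cases "\<bar>x\<bar> \<le> 1")
  case True then show ?thesis by (simp add: add_increasing2)
next
  case False
  then have "\<bar>x\<bar> * 1 \<le> \<bar>x\<bar> * \<bar>x\<bar>" by (intro mult_left_mono) auto
  then show ?thesis by (simp add: power2_eq_square abs_mult_self_eq)
qed



theorem lemma4p1:
  fixes M :: "'a measure" and F :: "nat \<Rightarrow> 'a measure" and \<xi> :: "nat \<Rightarrow> 'a \<Rightarrow> real"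
    and n :: nat
  assumes prob: "prob_space M"
    and sub: "\<And>i. i \<le> n \<Longrightarrow> subalgebra M (F i)"
    and F0: "sets (F 0) = {{}, space M}"
    and mono: "\<And>i. i < n \<Longrightarrow> sets (F i) \<subseteq> sets (F (Suc i))"
    and meas: "\<And>i. i \<in> {1..n} \<Longrightarrow> \<xi> i \<in> borel_measurable (F i)"
    and sq_int: "\<And>i. i \<in> {1..n} \<Longrightarrow> integrable M (\<lambda>x. (\<xi> i x)\<^sup>2)"
    and supmart: "\<And>i. i \<in> {1..n} \<Longrightarrow> AE x in M. real_cond_exp M (F (i - 1)) (\<xi> i) x \<le> 0"
  shows "\<forall>y \<ge> 0. \<forall>lam > 0. \<forall>i \<in> {1..n}.
    AE x in M.
      real_cond_exp M (F (i - 1))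
        (\<lambda>z. exp (lam * \<xi> i z - (lam * \<xi> i z)\<^sup>2 / 2 * indicator {w. \<xi> i w > y} z)) x
      \<le> exp (psi_coef lam y *
          real_cond_exp M (F (i - 1)) (\<lambda>z. (\<xi> i z)\<^sup>2 * indicator {w. \<xi> i w \<le> y} z) x)"
proof (intro allI impI ballI)
  fix y lam :: real and i assume y: "y \<ge> 0" and lam: "lam > 0" and i: "i \<in> {1..n}"
  define G where "G = F (i - 1)"
  define X where "X = \<xi> i"
  define c where "c = psi_coef lam y"
  interpret P: prob_space M by (rule prob)
  have "i - 1 \<le> n" using i by auto
  then have subG: "subalgebra M G" using sub unfolding G_def by blast
  have subi: "subalgebra M (F i)" using sub i by simp
  interpret S: sigma_finite_subalgebra M G
    by (rule finite_measure_subalgebra_is_sigma_finite,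
        intro finite_measure_subalgebra.intro finite_measure_subalgebra_axioms.intro)
       (simp_all add: P.finite_measure_axioms subG)
  have Xm[measurable]: "X \<in> borel_measurable M"
    using measurable_from_subalg[OF subi meas[OF i]] by (simp add: X_def)
  have X2: "integrable M (\<lambda>z. (X z)\<^sup>2)" using sq_int[OF i] by (simp add: X_def)
  have X1: "integrable M X"
  proof (rule Bochner_Integration.integrable_bound[of M "\<lambda>z. 1 + (X z)\<^sup>2"])
    show "integrable M (\<lambda>z. 1 + (X z)\<^sup>2)" using X2 by (intro Bochner_Integration.integrable_add P.integrable_const)
    show "AE z in M. norm (X z) \<le> norm (1 + (X z)\<^sup>2)" using abs_le_1sq by (intro AE_I2) (simp add: add_pos_nonneg)
  qed simp
  define Q where "Q = (\<lambda>z. (X z)\<^sup>2 * indicator {w. X w \<le> y} z)"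
  have Qe: "Q = (\<lambda>z. (X z)\<^sup>2 * (if X z \<le> y then 1 else 0))" by (auto simp: Q_def indicator_def)
  have Qm[measurable]: "Q \<in> borel_measurable M" unfolding Qe by measurable
  have Qi: "integrable M Q"
    by (rule Bochner_Integration.integrable_bound[OF X2 Qm]) (auto simp: Qe)
  define E where "E = (\<lambda>z. exp (lam * X z - (lam * X z)\<^sup>2 / 2 * indicator {w. X w > y} z))"
  have Ee: "E = (\<lambda>z. exp (lam * X z - (lam * X z)\<^sup>2 / 2 * (if X z > y then 1 else 0)))"
    by (auto simp: E_def indicator_def)
  have Em[measurable]: "E \<in> borel_measurable M" unfolding Ee by measurable
  define R where "R = (\<lambda>z. (1 + lam * X z) + c * Q z)"
  have ER: "E z \<le> R z" for z
    unfolding Ee R_def Qe c_def using pw[OF y lam, of "X z"] by simp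
  have Ri: "integrable M R" unfolding R_def using X1 Qi by (intro Bochner_Integration.integrable_add P.integrable_const Bochner_Integration.integrable_mult_right)
  have Ei: "integrable M E"
  proof (rule Bochner_Integration.integrable_bound[OF Ri Em])
    show "AE z in M. norm (E z) \<le> norm (R z)"
    proof (intro AE_I2)
      fix z
      have "norm (E z) = E z" by (simp add: Ee)
      also have "\<dots> \<le> R z" by (rule ER)
      also have "\<dots> \<le> norm (R z)" by simp
      finally show "norm (E z) \<le> norm (R z)" .
    qed
  qed
  have I3: "integrable M (\<lambda>z. lam * X z)" using X1 by (rule Bochner_Integration.integrable_mult_right)
  have I2: "integrable M (\<lambda>z. c * Q z)" using Qi by (rule Bochner_Integration.integrable_mult_right)
  have I1: "integrable M (\<lambda>z. 1 + lam * X z)" using I3 by (rule Bochner_Integration.integrable_add[OF P.integrable_const])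
  have a1: "AE x in M. real_cond_exp M G E x \<le> real_cond_exp M G R x"
    by (rule S.real_cond_exp_mono) (use ER Ei Ri in auto)
  have a2: "AE x in M. real_cond_exp M G R x
      = real_cond_exp M G (\<lambda>z. 1 + lam * X z) x + real_cond_exp M G (\<lambda>z. c * Q z) x"
    unfolding R_def by (rule S.real_cond_exp_add[OF I1 I2])
  have a3: "AE x in M. real_cond_exp M G (\<lambda>z. 1 + lam * X z) x
      = real_cond_exp M G (\<lambda>z. 1) x + real_cond_exp M G (\<lambda>z. lam * X z) x"
    by (rule S.real_cond_exp_add[OF P.integrable_const I3])
  have a4: "AE x in M. real_cond_exp M G (\<lambda>z. 1) x = 1"
    by (rule S.real_cond_exp_F_meas) (simp_all add: P.integrable_const)
  have a5: "AE x in M. real_cond_exp M G (\<lambda>z. lam * X z) x = lam * real_cond_exp M G X x"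
    by (rule S.real_cond_exp_cmult) (rule X1)
  have a6: "AE x in M. real_cond_exp M G (\<lambda>z. c * Q z) x = c * real_cond_exp M G Q x"
    by (rule S.real_cond_exp_cmult) (rule Qi)
  have a7: "AE x in M. real_cond_exp M G X x \<le> 0"
    using supmart[OF i] by (simp add: G_def X_def)
  have "AE x in M. real_cond_exp M G E x \<le> exp (c * real_cond_exp M G Q x)"
    using a1 a2 a3 a4 a5 a6 a7
  proof eventually_elim
    case (elim x)
    have "lam * real_cond_exp M G X x \<le> 0" using elim(7) lam by (simp add: mult_nonneg_nonpos less_imp_le)
    then have "real_cond_exp M G E x \<le> 1 + c * real_cond_exp M G Q x" using elim by linarith
    also have "\<dots> \<le> exp (c * real_cond_exp M G Q x)" by (rule exp_ge_add_one_self)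
    finally show ?case .
  qed
  then show "AE x in M.
      real_cond_exp M (F (i - 1))
        (\<lambda>z. exp (lam * \<xi> i z - (lam * \<xi> i z)\<^sup>2 / 2 * indicator {w. \<xi> i w > y} z)) x
      \<le> exp (psi_coef lam y *
          real_cond_exp M (F (i - 1)) (\<lambda>z. (\<xi> i z)\<^sup>2 * indicator {w. \<xi> i w \<le> y} z) x)"
    by (simp add: E_def Q_def G_def X_def c_def)
qed

end
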